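(* Fix $p>0$. Let $\ell$ be the set of real sequences, $\mathbf e_j\in\ell$ the $j$-th unit vector, $\mathcal X=\{\mathbf e_1,\mathbf e_2,\dots\}$, and identify $f=(f_j)\in\ell$ with the function $f(\mathbf e_j)=f_j$ on $\mathcal X$. Let $B_p=\{g\in\ell:|g_j|\le j^{-1/p}\ \forall j\}$ and $\mathcal F=\{f\in\ell: f_j=(1+g_j)/2,\ g\in B_p\}$. Then: (a) there is a constant $A$ depending only on $p$ such that $\mathcal H_2(\mathcal F,\epsilon)\le(A/\epsilon)^p$ for all $\epsilon>0$ and all $n$; (b) there is an absolute constant $c>0$ such that for every $n\ge1$, $\inf_{\hat f}\sup\mathbb E\|\hat f-\eta\|^2\ge cn^{-2/(2+p)}$, where the supremum is over distributions of $(X,Y)$ on $\mathcal X\times\{0,1\}$ with $\eta\in\mathcal F$; (c) if $p\ge2$, for every $n\ge1$, $\inf_{\hat f}\sup_{P_{XY}}\{\mathbb E\|\hat f-\eta\|^2-\inf_{f\in\mathcal F}\|f-\eta\|^2\}\ge cn^{-1/(p-1)}$, the supremum over all distributions on $\mathcal X\times[0,1]$.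
   Context: A sample $D_n$ consists of $n$ i.i.d. copies of $(X,Y)$; estimators $\hat f$ are measurable functions of $D_n$ with values in $\ell$; $\eta(x)=\mathbb E[Y\mid X=x]$; $\|f\|^2=\int f^2\,d\mu_X$ with $\mu_X$ the law of $X$. For $S=\{(x_i,y_i)\}_{i\le n}$, $\mathcal N_2(\mathcal F,\epsilon,S)$ is the minimal size of an $\epsilon$-cover of $\mathcal F$ in the pseudo-metric $(\frac1n\sum_i(f(x_i)-g(x_i))^2)^{1/2}$, and $\mathcal H_2(\mathcal F,\epsilon)=\sup_S\log\mathcal N_2(\mathcal F,\epsilon,S)$ over all $S\in(\mathcal X\times[0,1])^n$. *)

theory Defs
  imports "HOL-Probability.Probability"
begin

text \<open>Index convention: the point e_(j+1) of the paper is represented by j :: nat,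
  so X = nat and an element f of the sequence space is a function nat => real.\<close>

definition Bp :: "real \<Rightarrow> (nat \<Rightarrow> real) set" where
  "Bp p = {g. \<forall>j. \<bar>g j\<bar> \<le> real (Suc j) powr (-1 / p)}"

definition Fcls :: "real \<Rightarrow> (nat \<Rightarrow> real) set" where
  "Fcls p = {f. \<exists>g\<in>Bp p. f = (\<lambda>j. (1 + g j) / 2)}"

definition emp_dist :: "(nat \<times> real) list \<Rightarrow> (nat \<Rightarrow> real) \<Rightarrow> (nat \<Rightarrow> real) \<Rightarrow> real" where
  "emp_dist S f g = sqrt ((\<Sum>z\<leftarrow>S. (f (fst z) - g (fst z))^2) / real (length S))"

text \<open>Minimal size of an eps-cover (infinity if no finite cover exists).\<close>
definition cover_num :: "(nat \<Rightarrow> real) set \<Rightarrow> real \<Rightarrow> (nat \<times> real) list \<Rightarrow> enat" where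
  "cover_num F eps S =
     (INF C \<in> {C. finite C \<and> (\<forall>f\<in>F. \<exists>g\<in>C. emp_dist S f g \<le> eps)}. enat (card C))"

definition H2 :: "(nat \<Rightarrow> real) set \<Rightarrow> real \<Rightarrow> nat \<Rightarrow> ereal" where
  "H2 F eps n = (SUP S \<in> {S. length S = n \<and> (\<forall>z\<in>set S. snd z \<in> {0..1})}.
      (case cover_num F eps S of enat k \<Rightarrow> ereal (ln (real k)) | \<infinity> \<Rightarrow> \<infinity>))"

abbreviation obs_space :: "(nat \<times> real) measure" where
  "obs_space \<equiv> count_space UNIV \<Otimes>\<^sub>M borel"

definition sample_space :: "nat \<Rightarrow> (nat \<Rightarrow> nat \<times> real) measure" where
  "sample_space n = PiM {..<n} (\<lambda>_. obs_space)"

definition estimators :: "nat \<Rightarrow> ((nat \<Rightarrow> nat \<times> real) \<Rightarrow> (nat \<Rightarrow> real)) set" where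
  "estimators n = {fh. \<forall>j. (\<lambda>D. fh D j) \<in> borel_measurable (sample_space n)}"

definition dists :: "real set \<Rightarrow> (nat \<times> real) measure set" where
  "dists Yset = {M. prob_space M \<and> sets M = sets obs_space \<and> measure M (UNIV \<times> Yset) = 1}"

definition marg :: "(nat \<times> real) measure \<Rightarrow> nat measure" where
  "marg M = distr M (count_space UNIV) fst"

text \<open>Regression function E[Y | X = x] (X is discrete); set to 0 where P(X=x)=0.\<close>
definition eta :: "(nat \<times> real) measure \<Rightarrow> nat \<Rightarrow> real" where
  "eta M x = (\<integral>z. snd z * indicator ({x} \<times> UNIV) z \<partial>M) / measure M ({x} \<times> UNIV)"

definition sqdist :: "(nat \<times> real) measure \<Rightarrow> (nat \<Rightarrow> real) \<Rightarrow> (nat \<Rightarrow> real) \<Rightarrow> ennreal" where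
  "sqdist M f g = (\<integral>\<^sup>+ x. ennreal ((f x - g x)^2) \<partial>marg M)"

definition risk :: "nat \<Rightarrow> (nat \<times> real) measure \<Rightarrow> ((nat \<Rightarrow> nat \<times> real) \<Rightarrow> (nat \<Rightarrow> real)) \<Rightarrow> ennreal" where
  "risk n M fh = (\<integral>\<^sup>+ D. sqdist M (fh D) (eta M) \<partial>PiM {..<n} (\<lambda>_. M))"

text \<open>eta belongs to F (up to mu_X-null sets, where E[Y|X] is not determined).\<close>
definition eta_in :: "(nat \<times> real) measure \<Rightarrow> (nat \<Rightarrow> real) set \<Rightarrow> bool" where
  "eta_in M F \<longleftrightarrow> (\<exists>f\<in>F. \<forall>x. measure M ({x} \<times> UNIV) > 0 \<longrightarrow> f x = eta M x)"

end

theory Submission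
  imports Defs
begin


lemma space_obs[simp]: "space obs_space = UNIV"
  by (simp add: space_pair_measure)

lemma bridge:
  fixes P :: "(nat\<times>real) pmf" and S :: "(nat \<times> real) set" and I :: "nat set"
  assumes fI: "finite I" and fS: "finite S" and sub: "set_pmf P \<subseteq> S"
    and Fm: "F \<in> borel_measurable (PiM I (\<lambda>_. obs_space))"
  shows "(\<integral>\<^sup>+D. F D \<partial>PiM I (\<lambda>_. distr (measure_pmf P) obs_space id))
       = (\<Sum>D\<in>PiE I (\<lambda>_. S). (\<Prod>i\<in>I. ennreal (pmf P (D i))) * F D)"
proof -
  define M where "M = distr (measure_pmf P) obs_space id"
  define d :: "nat \<times> real" where "d = undefined"
  define Q where "Q = Pi_pmf I d (\<lambda>_. P)"
  have Mprob: "prob_space M" unfolding M_def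
    by (intro prob_space.prob_space_distr measure_pmf.prob_space_axioms) (simp add: measurable_def)
  have setsM: "sets M = sets obs_space" unfolding M_def by simp
  have spM[simp]: "space M = UNIV" unfolding M_def by simp
  interpret PS: product_prob_space "\<lambda>_. M"
    by (intro product_prob_spaceI Mprob)
  have eq: "distr (measure_pmf Q) (PiM I (\<lambda>_. M)) (\<lambda>x. restrict x I) = PiM I (\<lambda>_. M)"
  proof (rule PS.PiM_eqI)
    show "finite I" by fact
    show "sets (distr (measure_pmf Q) (PiM I (\<lambda>_. M)) (\<lambda>x. restrict x I)) = sets (PiM I (\<lambda>_. M))" by simp
  next
    fix A assume A: "\<And>i. i \<in> I \<Longrightarrow> A i \<in> sets M"
    have "Pi\<^sub>E I A \<in> sets (Pi\<^sub>M I (\<lambda>i. M))"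
      using A by (intro sets_PiM_I_finite fI) auto
    hence "emeasure (distr (measure_pmf Q) (Pi\<^sub>M I (\<lambda>i. M)) (\<lambda>x. restrict x I)) (Pi\<^sub>E I A) =
             emeasure (measure_pmf Q) ((\<lambda>x. restrict x I) -` Pi\<^sub>E I A)"
      by (subst emeasure_distr) (auto simp: measurable_def space_PiM)
    also have "(\<lambda>x. restrict x I) -` Pi\<^sub>E I A = Pi I A" by (auto simp: PiE_def Pi_def)
    also have "emeasure (measure_pmf Q) (Pi I A) = ennreal (\<Prod>i\<in>I. measure_pmf.prob P (A i))"
      unfolding Q_def measure_pmf.emeasure_eq_measure by (simp add: measure_Pi_pmf_Pi fI)
    also have "\<dots> = (\<Prod>i\<in>I. emeasure M (A i))"
      using A by (simp add: M_def emeasure_distr measure_pmf.emeasure_eq_measure prod_ennreal measurable_def)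
    finally show "emeasure (distr (measure_pmf Q) (Pi\<^sub>M I (\<lambda>i. M)) (\<lambda>x. restrict x I)) (Pi\<^sub>E I A) = (\<Prod>i\<in>I. emeasure M (A i))" .
  qed
  have Fm': "F \<in> borel_measurable (PiM I (\<lambda>_. M))"
  proof -
    have "sets (PiM I (\<lambda>_. M)) = sets (PiM I (\<lambda>_. obs_space))"
      by (intro sets_PiM_cong) (auto simp: setsM)
    then show ?thesis using Fm measurable_cong_sets by blast
  qed
  have "(\<integral>\<^sup>+D. F D \<partial>PiM I (\<lambda>_. M)) = (\<integral>\<^sup>+D. F D \<partial>distr (measure_pmf Q) (PiM I (\<lambda>_. M)) (\<lambda>x. restrict x I))"
    by (simp add: eq)
  also have "\<dots> = (\<integral>\<^sup>+x. F (restrict x I) \<partial>measure_pmf Q)"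
    apply (rule nn_integral_distr) apply (simp add: measurable_def space_PiM) using Fm' by simp
  also have "\<dots> = (\<integral>\<^sup>+x. ennreal (pmf Q x) * F (restrict x I) \<partial>count_space UNIV)"
    by (rule nn_integral_measure_pmf)
  also have "\<dots> = (\<Sum>x\<in>PiE_dflt I d (\<lambda>_. S). ennreal (pmf Q x) * F (restrict x I))"
  proof (rule nn_integral_count_space')
    show "finite (PiE_dflt I d (\<lambda>_. S))" using fI fS by auto
  next
    fix x assume "x \<notin> PiE_dflt I d (\<lambda>_. S)"
    then consider "\<exists>i. i \<notin> I \<and> x i \<noteq> d" | i where "i \<in> I" "x i \<notin> S" by (auto simp: PiE_dflt_def)
    then have "pmf Q x = 0"
    proof cases
      case 1 then show ?thesis by (auto simp: Q_def pmf_Pi fI)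
    next
      case 2
      then have "pmf P (x i) = 0" using sub by (auto simp: set_pmf_eq)
      then show ?thesis using 2 fI by (auto simp: Q_def pmf_Pi)
    qed
    then show "ennreal (pmf Q x) * F (restrict x I) = 0" by simp
  qed simp
  also have "\<dots> = (\<Sum>x\<in>PiE_dflt I d (\<lambda>_. S). (\<Prod>i\<in>I. ennreal (pmf P (restrict x I i))) * F (restrict x I))"
  proof (rule sum.cong[OF refl])
    fix x assume x: "x \<in> PiE_dflt I d (\<lambda>_. S)"
    then have "pmf Q x = (\<Prod>i\<in>I. pmf P (x i))" by (auto simp: Q_def pmf_Pi fI PiE_dflt_def)
    then show "ennreal (pmf Q x) * F (restrict x I) = (\<Prod>i\<in>I. ennreal (pmf P (restrict x I i))) * F (restrict x I)"
      by (simp add: prod_ennreal)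
  qed
  also have "\<dots> = (\<Sum>D\<in>(\<lambda>h. restrict h I) ` PiE_dflt I d (\<lambda>_. S). (\<Prod>i\<in>I. ennreal (pmf P (D i))) * F D)"
    by (rule sum.reindex[symmetric, unfolded comp_def]) (force simp: inj_on_def PiE_dflt_def fun_eq_iff)
  also have "(\<lambda>h. restrict h I) ` PiE_dflt I d (\<lambda>_. S) = PiE I (\<lambda>_. S)" by (rule restrict_PiE_dflt)
  finally show ?thesis unfolding M_def .
qed


definition sg :: "bool \<Rightarrow> real" where "sg b = (if b then 1 else -1)"

definition Sd :: "nat \<Rightarrow> (nat \<times> real) set" where "Sd m = {..<m} \<times> {0,1}"

definition wd :: "nat \<Rightarrow> real \<Rightarrow> (nat \<Rightarrow> bool) \<Rightarrow> nat \<times> real \<Rightarrow> real" where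
  "wd m \<delta> \<sigma> z = (if z \<in> Sd m then (1/2 + \<delta> * sg (\<sigma> (fst z)) * (2 * snd z - 1)) / m else 0)"

definition td :: "real \<Rightarrow> (nat \<Rightarrow> bool) \<Rightarrow> nat \<Rightarrow> real" where
  "td \<delta> \<sigma> j = 1/2 + \<delta> * sg (\<sigma> j)"

definition Pd where "Pd m \<delta> \<sigma> = embed_pmf (wd m \<delta> \<sigma>)"
definition Md where "Md m \<delta> \<sigma> = distr (measure_pmf (Pd m \<delta> \<sigma>)) obs_space id"

lemma sg_sq[simp]: "sg b * sg b = 1" "\<bar>sg b\<bar> = 1" by (auto simp: sg_def)

lemma finite_Sd[simp]: "finite (Sd m)" by (simp add: Sd_def)

lemma sum_Sd: "(\<Sum>z\<in>Sd m. g z) = (\<Sum>j<m. g (j,0) + g (j,1))"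
  unfolding Sd_def by (simp add: sum.cartesian_product')

lemma mem_Sd[simp]: "(j,y) \<in> Sd m \<longleftrightarrow> j < m \<and> (y = 0 \<or> y = 1)"
  by (auto simp: Sd_def)

lemma wd_simps[simp]: "j < m \<Longrightarrow> wd m \<delta> \<sigma> (j,0) = (1/2 - \<delta> * sg (\<sigma> j)) / m"
   "j < m \<Longrightarrow> wd m \<delta> \<sigma> (j,1) = (1/2 + \<delta> * sg (\<sigma> j)) / m"
  by (auto simp: wd_def)

locale des =
  fixes m :: nat and \<delta> :: real
  assumes m: "m > 0" and d0: "0 \<le> \<delta>" and d1: "\<delta> \<le> 1/2"
begin

lemma wd_nonneg: "0 \<le> wd m \<delta> \<sigma> z"
proof -
  have "\<bar>\<delta> * sg (\<sigma> (fst z)) * (2 * snd z - 1)\<bar> \<le> 1/2" if "z \<in> Sd m"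
    using that d0 d1 by (auto simp: Sd_def abs_mult)
  then show ?thesis unfolding wd_def using m by (auto intro!: divide_nonneg_pos)
qed

lemma wd_sum: "(\<Sum>z\<in>Sd m. wd m \<delta> \<sigma> z) = 1"
  using m by (simp add: sum_Sd add_divide_distrib[symmetric] algebra_simps)

lemma pmf_Pd: "pmf (Pd m \<delta> \<sigma>) z = wd m \<delta> \<sigma> z"
  unfolding Pd_def
proof (rule pmf_embed_pmf)
  show "0 \<le> wd m \<delta> \<sigma> x" for x by (rule wd_nonneg)
  have "(\<integral>\<^sup>+ x. ennreal (wd m \<delta> \<sigma> x) \<partial>count_space UNIV) = (\<Sum>z\<in>Sd m. ennreal (wd m \<delta> \<sigma> z))"
    by (rule nn_integral_count_space') (auto simp: wd_def)
  also have "\<dots> = 1" using wd_sum wd_nonneg by (simp add: sum_ennreal)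
  finally show "(\<integral>\<^sup>+ x. ennreal (wd m \<delta> \<sigma> x) \<partial>count_space UNIV) = 1" .
qed

lemma set_Pd: "set_pmf (Pd m \<delta> \<sigma>) \<subseteq> Sd m"
  by (auto simp: set_pmf_eq pmf_Pd wd_def)

lemma sets_Md[simp]: "sets (Md m \<delta> \<sigma>) = sets obs_space" and space_Md[simp]: "space (Md m \<delta> \<sigma>) = UNIV"
  by (simp_all add: Md_def)

lemma prob_Md: "prob_space (Md m \<delta> \<sigma>)"
  unfolding Md_def
  by (intro prob_space.prob_space_distr measure_pmf.prob_space_axioms) (simp add: measurable_def)

lemma integral_Md: assumes that: "f \<in> borel_measurable obs_space"
  shows "(\<integral>z. f z \<partial>Md m \<delta> \<sigma>) = (\<Sum>z\<in>Sd m. f z * wd m \<delta> \<sigma> z)"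
proof -
  have "(\<integral>z. f z \<partial>Md m \<delta> \<sigma>) = (\<integral>z. f z \<partial>measure_pmf (Pd m \<delta> \<sigma>))"
    using that unfolding Md_def by (subst integral_distr) (auto simp: measurable_def)
  also have "\<dots> = (\<Sum>z\<in>Sd m. f z * pmf (Pd m \<delta> \<sigma>) z)"
    by (rule integral_measure_pmf_real) (use set_Pd in auto)
  finally show ?thesis by (simp add: pmf_Pd)
qed

lemma measure_Md: assumes A: "A \<in> sets obs_space"
  shows "measure (Md m \<delta> \<sigma>) A = (\<Sum>z\<in>Sd m. indicator A z * wd m \<delta> \<sigma> z)"
proof -
  interpret prob_space "Md m \<delta> \<sigma>" by (rule prob_Md)
  have "measure (Md m \<delta> \<sigma>) A = (\<integral>z. indicator A z \<partial>Md m \<delta> \<sigma>)"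
    by simp
  also have "\<dots> = (\<Sum>z\<in>Sd m. indicator A z * wd m \<delta> \<sigma> z)"
    by (rule integral_Md) (use A in measurable)
  finally show ?thesis .
qed

lemma col_sets: "{j} \<times> UNIV \<in> sets obs_space"
  by (auto intro!: pair_measureI)
lemma row_sets: "Y \<in> sets borel \<Longrightarrow> UNIV \<times> Y \<in> sets obs_space"
  by (auto intro!: pair_measureI)

lemma wd01: "x < m \<Longrightarrow> ennreal (wd m \<delta> \<sigma> (x,0)) + ennreal (wd m \<delta> \<sigma> (x,1)) = ennreal (1/m)"
  using wd_nonneg[of \<sigma> "(x,0)"] wd_nonneg[of \<sigma> "(x,1)"]
  by (subst ennreal_plus[symmetric]) (auto simp: add_divide_distrib[symmetric] simp del: ennreal_plus)

lemma Md_dists: "Md m \<delta> \<sigma> \<in> dists {0,1}"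
proof -
  have "measure (Md m \<delta> \<sigma>) (UNIV \<times> {0,1}) = (\<Sum>z\<in>Sd m. wd m \<delta> \<sigma> z)"
    by (subst measure_Md) (auto intro!: row_sets sum.cong simp: Sd_def indicator_def)
  then show ?thesis unfolding dists_def using prob_Md wd_sum by auto
qed

lemma dists_mono: "dists {0,1} \<subseteq> dists {0..1}"
proof
  fix M assume "M \<in> dists {0,1}"
  then have M: "prob_space M" "sets M = sets obs_space" "measure M (UNIV \<times> {0,1}) = 1"
    by (auto simp: dists_def)
  interpret prob_space M by fact
  have "1 = measure M (UNIV \<times> {0,1})" using M by simp
  also have "\<dots> \<le> measure M (UNIV \<times> {0..1})"
    using M(2) by (intro finite_measure_mono) (auto simp: row_sets)
  finally show "M \<in> dists {0..1}" using M prob_le_1[of "UNIV \<times> {0..1}"] by (auto simp: dists_def)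
qed

lemma measure_col: "measure (Md m \<delta> \<sigma>) ({j} \<times> UNIV) = (if j < m then 1/m else 0)"
proof -
  have "measure (Md m \<delta> \<sigma>) ({j} \<times> UNIV) = (\<Sum>k<m. if k = j then 1/m else 0)"
    unfolding measure_Md[OF col_sets(1)] sum_Sd
    by (rule sum.cong) (auto simp: indicator_def add_divide_distrib[symmetric])
  then show ?thesis by simp
qed

lemma eta_Md: "j < m \<Longrightarrow> eta (Md m \<delta> \<sigma>) j = td \<delta> \<sigma> j"
proof -
  assume j: "j < m"
  have "(\<integral>z. snd z * indicator ({j} \<times> UNIV) z \<partial>Md m \<delta> \<sigma>) = (\<Sum>k<m. if k = j then td \<delta> \<sigma> j / m else 0)"
    unfolding integral_Md[OF borel_measurable_times[OF measurable_snd borel_measurable_indicator[OF col_sets(1)]]] sum_Sd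
    by (rule sum.cong) (auto simp: indicator_def td_def)
  then show ?thesis using j m unfolding eta_def measure_col by simp
qed

lemma nn_marg: "(\<integral>\<^sup>+x. h x \<partial>marg (Md m \<delta> \<sigma>)) = (\<Sum>j<m. ennreal (1/m) * h j)"
proof -
  have "(\<integral>\<^sup>+x. h x \<partial>marg (Md m \<delta> \<sigma>)) = (\<integral>\<^sup>+z. h (fst z) \<partial>measure_pmf (Pd m \<delta> \<sigma>))"
  proof -
    have fm: "fst \<in> measurable (Md m \<delta> \<sigma>) (count_space UNIV)"
      by (simp add: measurable_cong_sets[OF sets_Md refl])
    have "(\<integral>\<^sup>+x. h x \<partial>marg (Md m \<delta> \<sigma>)) = (\<integral>\<^sup>+z. h (fst z) \<partial>Md m \<delta> \<sigma>)"
      unfolding marg_def by (rule nn_integral_distr[OF fm]) simp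
    also have "\<dots> = (\<integral>\<^sup>+z. h (fst z) \<partial>measure_pmf (Pd m \<delta> \<sigma>))"
    proof -
      have hm: "(\<lambda>z. h (fst z)) \<in> borel_measurable obs_space"
        by (rule measurable_compose[OF measurable_fst]) simp
      show ?thesis unfolding Md_def using hm by (subst nn_integral_distr) (auto simp: measurable_def)
    qed
    finally show ?thesis .
  qed
  also have "\<dots> = (\<Sum>z\<in>Sd m. h (fst z) * ennreal (wd m \<delta> \<sigma> z))"
    unfolding nn_integral_measure_pmf
    by (subst nn_integral_count_space'[of "Sd m"]) (auto simp: pmf_Pd wd_def mult.commute)
  also have "\<dots> = (\<Sum>j<m. ennreal (1/m) * h j)"
    unfolding sum_Sd by (rule sum.cong) (auto simp: distrib_left[symmetric] wd01 mult.commute simp del: wd_simps)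
  finally show ?thesis .
qed

end


definition Tn :: "nat \<Rightarrow> nat \<Rightarrow> (nat \<Rightarrow> nat \<times> real) set" where
  "Tn n m = PiE {..<n} (\<lambda>_. Sd m)"

definition Wt where "Wt n m \<delta> \<sigma> D = (\<Prod>i<n. wd m \<delta> \<sigma> (D i))"

definition Sig :: "nat \<Rightarrow> (nat \<Rightarrow> bool) set" where "Sig m = PiE {..<m} (\<lambda>_. UNIV)"

definition flip :: "nat \<Rightarrow> (nat \<Rightarrow> bool) \<Rightarrow> (nat \<Rightarrow> bool)" where "flip j \<sigma> = \<sigma>(j := \<not> \<sigma> j)"

definition Gj where "Gj n m \<delta> a j \<sigma> = (\<Sum>D\<in>Tn n m. Wt n m \<delta> \<sigma> D * (a D j - td \<delta> \<sigma> j)^2)"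

definition Rk where "Rk n m \<delta> a \<sigma> = (\<Sum>D\<in>Tn n m. Wt n m \<delta> \<sigma> D * ((\<Sum>j<m. (a D j - td \<delta> \<sigma> j)^2) / m))"

lemma finite_Tn[simp]: "finite (Tn n m)" by (simp add: Tn_def finite_PiE)
lemma finite_Sig[simp]: "finite (Sig m)" by (simp add: Sig_def finite_PiE)
lemma Sig_ne: "Sig m \<noteq> {}" by (simp add: Sig_def PiE_eq_empty_iff)

lemma pair_ineq:
  fixes w w' a t t' :: real
  assumes "0 \<le> w" "0 \<le> w'"
  shows "min w w' * (t - t')^2 / 2 \<le> w * (a - t)^2 + w' * (a - t')^2"
proof -
  have "(t - t')^2 / 2 \<le> (a - t)^2 + (a - t')^2"
  proof -
    have "0 \<le> (2*a - t - t')^2" by simp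
    then show ?thesis by (simp add: power2_eq_square field_simps)
  qed
  then have "min w w' * ((t - t')^2 / 2) \<le> min w w' * ((a - t)^2 + (a - t')^2)"
    using assms by (intro mult_left_mono) auto
  also have "\<dots> \<le> w * (a - t)^2 + w' * (a - t')^2"
    by (simp add: distrib_left add_mono mult_right_mono)
  finally show ?thesis by simp
qed

lemma flip_bij: "j < m \<Longrightarrow> bij_betw (flip j) (Sig m) (Sig m)"
proof -
  assume j: "j < m"
  have ff: "flip j (flip j \<sigma>) = \<sigma>" for \<sigma> by (auto simp: flip_def fun_eq_iff)
  have im: "flip j ` Sig m \<subseteq> Sig m"
    using j by (auto simp: flip_def Sig_def PiE_def extensional_def)
  show ?thesis by (rule bij_betw_byWitness[of _ "flip j"]) (use ff im in auto)
qed

lemma td_flip: "(td \<delta> \<sigma> j - td \<delta> (flip j \<sigma>) j)^2 = 4 * \<delta>^2"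
  by (auto simp: td_def flip_def sg_def power2_eq_square algebra_simps)

context des begin

lemma Wt_nonneg: "0 \<le> Wt n m \<delta> \<sigma> D"
  unfolding Wt_def by (intro prod_nonneg) (simp add: wd_nonneg)

lemma Gj_pair:
  assumes L: "L \<le> (\<Sum>D\<in>Tn n m. min (Wt n m \<delta> \<sigma> D) (Wt n m \<delta> (flip j \<sigma>) D))"
  shows "2 * \<delta>^2 * L \<le> Gj n m \<delta> a j \<sigma> + Gj n m \<delta> a j (flip j \<sigma>)"
proof -
  have "2 * \<delta>^2 * L \<le> (\<Sum>D\<in>Tn n m. min (Wt n m \<delta> \<sigma> D) (Wt n m \<delta> (flip j \<sigma>) D) * (4 * \<delta>^2) / 2)"
  proof -
    have "(\<Sum>D\<in>Tn n m. min (Wt n m \<delta> \<sigma> D) (Wt n m \<delta> (flip j \<sigma>) D) * (4 * \<delta>^2) / 2)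
        = 2 * \<delta>^2 * (\<Sum>D\<in>Tn n m. min (Wt n m \<delta> \<sigma> D) (Wt n m \<delta> (flip j \<sigma>) D))"
      by (simp add: sum_distrib_left mult_ac)
    then show ?thesis using L by (simp add: mult_left_mono)
  qed
  also have "\<dots> \<le> Gj n m \<delta> a j \<sigma> + Gj n m \<delta> a j (flip j \<sigma>)"
    unfolding Gj_def sum.distrib[symmetric]
  proof (rule sum_mono)
    fix D
    have "min (Wt n m \<delta> \<sigma> D) (Wt n m \<delta> (flip j \<sigma>) D) * (td \<delta> \<sigma> j - td \<delta> (flip j \<sigma>) j)^2 / 2
       \<le> Wt n m \<delta> \<sigma> D * (a D j - td \<delta> \<sigma> j)^2 + Wt n m \<delta> (flip j \<sigma>) D * (a D j - td \<delta> (flip j \<sigma>) j)^2"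
      by (rule pair_ineq[OF Wt_nonneg Wt_nonneg])
    then show "min (Wt n m \<delta> \<sigma> D) (Wt n m \<delta> (flip j \<sigma>) D) * (4 * \<delta>^2) / 2
       \<le> Wt n m \<delta> \<sigma> D * (a D j - td \<delta> \<sigma> j)^2 + Wt n m \<delta> (flip j \<sigma>) D * (a D j - td \<delta> (flip j \<sigma>) j)^2"
      by (simp only: td_flip)
  qed
  finally show ?thesis .
qed

lemma Gj_sum:
  assumes j: "j < m" and L: "\<And>\<sigma>. L \<le> (\<Sum>D\<in>Tn n m. min (Wt n m \<delta> \<sigma> D) (Wt n m \<delta> (flip j \<sigma>) D))"
  shows "card (Sig m) * \<delta>^2 * L \<le> (\<Sum>\<sigma>\<in>Sig m. Gj n m \<delta> a j \<sigma>)"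
proof -
  have "(\<Sum>\<sigma>\<in>Sig m. Gj n m \<delta> a j (flip j \<sigma>)) = (\<Sum>\<sigma>\<in>Sig m. Gj n m \<delta> a j \<sigma>)"
    by (rule sum.reindex_bij_betw[OF flip_bij[OF j]])
  moreover have "(\<Sum>\<sigma>\<in>Sig m. 2 * \<delta>^2 * L) \<le> (\<Sum>\<sigma>\<in>Sig m. Gj n m \<delta> a j \<sigma> + Gj n m \<delta> a j (flip j \<sigma>))"
    by (rule sum_mono) (rule Gj_pair[OF L])
  ultimately show ?thesis by (simp add: sum.distrib)
qed

lemma Rk_sum:
  assumes L: "\<And>\<sigma> j. j < m \<Longrightarrow> L \<le> (\<Sum>D\<in>Tn n m. min (Wt n m \<delta> \<sigma> D) (Wt n m \<delta> (flip j \<sigma>) D))"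
  shows "card (Sig m) * \<delta>^2 * L \<le> (\<Sum>\<sigma>\<in>Sig m. Rk n m \<delta> a \<sigma>)"
proof -
  have "(\<Sum>\<sigma>\<in>Sig m. Rk n m \<delta> a \<sigma>) = (\<Sum>j<m. \<Sum>\<sigma>\<in>Sig m. Gj n m \<delta> a j \<sigma>) / m"
  proof -
    have "Rk n m \<delta> a \<sigma> = (\<Sum>j<m. Gj n m \<delta> a j \<sigma>) / m" for \<sigma>
    proof -
      have "Rk n m \<delta> a \<sigma> = (\<Sum>D\<in>Tn n m. (\<Sum>j<m. Wt n m \<delta> \<sigma> D * (a D j - td \<delta> \<sigma> j)^2) / m)"
        unfolding Rk_def by (rule sum.cong) (auto simp: sum_distrib_left)
      also have "\<dots> = (\<Sum>D\<in>Tn n m. \<Sum>j<m. Wt n m \<delta> \<sigma> D * (a D j - td \<delta> \<sigma> j)^2) / m"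
        by (rule sum_divide_distrib[symmetric])
      also have "\<dots> = (\<Sum>j<m. Gj n m \<delta> a j \<sigma>) / m"
        unfolding Gj_def by (subst sum.swap) simp
      finally show ?thesis .
    qed
    then have "(\<Sum>\<sigma>\<in>Sig m. Rk n m \<delta> a \<sigma>) = (\<Sum>\<sigma>\<in>Sig m. \<Sum>j<m. Gj n m \<delta> a j \<sigma>) / m"
      by (simp add: sum_divide_distrib)
    then show ?thesis by (subst (asm) sum.swap)
  qed
  also have "\<dots> \<ge> (\<Sum>j<m. card (Sig m) * \<delta>^2 * L) / m"
    using m by (intro divide_right_mono sum_mono Gj_sum L) auto
  finally show ?thesis using m by simp
qed

end


lemma sqrt_prod: "finite A \<Longrightarrow> sqrt (\<Prod>i\<in>A. f i) = (\<Prod>i\<in>A. sqrt (f i))"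
  by (induction A rule: finite_induct) (auto simp: real_sqrt_mult)

context des begin

lemma sumW: "(\<Sum>D\<in>Tn n m. Wt n m \<delta> \<sigma> D) = 1"
proof -
  have "(\<Prod>i<n. \<Sum>z\<in>Sd m. wd m \<delta> \<sigma> z) = (\<Sum>D\<in>Tn n m. Wt n m \<delta> \<sigma> D)"
    unfolding Tn_def Wt_def by (rule prod_sum_PiE) auto
  then show ?thesis using wd_sum by simp
qed

lemma aff_one:
  assumes j: "j < m"
  shows "(\<Sum>z\<in>Sd m. sqrt (wd m \<delta> \<sigma> z * wd m \<delta> (flip j \<sigma>) z)) = 1 - (1 - sqrt (1 - 4*\<delta>^2)) / m"
proof -
  have sgf: "sg (flip j \<sigma> j) = - sg (\<sigma> j)" by (simp add: flip_def sg_def)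
  have eqk: "sqrt (wd m \<delta> \<sigma> (k,0) * wd m \<delta> (flip j \<sigma>) (k,0)) + sqrt (wd m \<delta> \<sigma> (k,1) * wd m \<delta> (flip j \<sigma>) (k,1))
     = (if k = j then sqrt (1 - 4*\<delta>^2) / m else 1/m)" if k: "k < m" for k
  proof (cases "k = j")
    case True
    have e1: "(1/2 - u * v) * (1/2 + u * v) = 1/4 - u * u * (v * v)" for u v :: real by algebra
    have e2: "(1/2 + u * v) * (1/2 - u * v) = 1/4 - u * u * (v * v)" for u v :: real by algebra
    have "(1/2 - \<delta> * sg (\<sigma> j)) * (1/2 + \<delta> * sg (\<sigma> j)) = (1 - 4*\<delta>^2)/4"
      unfolding e1 sg_sq by (simp add: power2_eq_square)
    moreover have "(1/2 + \<delta> * sg (\<sigma> j)) * (1/2 - \<delta> * sg (\<sigma> j)) = (1 - 4*\<delta>^2)/4"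
      unfolding e2 sg_sq by (simp add: power2_eq_square)
    note E = this
    have q: "sqrt (((1 - 4*\<delta>^2)/4) / (real m * real m)) = sqrt (1 - 4*\<delta>^2) / (2*m)"
      by (simp add: real_sqrt_divide real_sqrt_mult)
    have "wd m \<delta> \<sigma> (k,0) * wd m \<delta> (flip j \<sigma>) (k,0) = ((1 - 4*\<delta>^2)/4) / (real m * real m)"
       "wd m \<delta> \<sigma> (k,1) * wd m \<delta> (flip j \<sigma>) (k,1) = ((1 - 4*\<delta>^2)/4) / (real m * real m)"
      using True k sgf E by (simp_all add: divide_simps mult.commute)
    then have "sqrt (wd m \<delta> \<sigma> (k,0) * wd m \<delta> (flip j \<sigma>) (k,0)) = sqrt (1 - 4*\<delta>^2) / (2*m)"
       "sqrt (wd m \<delta> \<sigma> (k,1) * wd m \<delta> (flip j \<sigma>) (k,1)) = sqrt (1 - 4*\<delta>^2) / (2*m)"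
      using q by simp_all
    then show ?thesis using True by simp
  next
    case False
    then have "flip j \<sigma> k = \<sigma> k" by (simp add: flip_def)
    then have "sqrt (wd m \<delta> \<sigma> (k,0) * wd m \<delta> (flip j \<sigma>) (k,0)) = wd m \<delta> \<sigma> (k,0)"
      "sqrt (wd m \<delta> \<sigma> (k,1) * wd m \<delta> (flip j \<sigma>) (k,1)) = wd m \<delta> \<sigma> (k,1)"
    proof -
      assume fk: "flip j \<sigma> k = \<sigma> k"
      have "wd m \<delta> (flip j \<sigma>) (k,y) = wd m \<delta> \<sigma> (k,y)" for y using fk by (auto simp: wd_def)
      then show "sqrt (wd m \<delta> \<sigma> (k,0) * wd m \<delta> (flip j \<sigma>) (k,0)) = wd m \<delta> \<sigma> (k,0)"
        "sqrt (wd m \<delta> \<sigma> (k,1) * wd m \<delta> (flip j \<sigma>) (k,1)) = wd m \<delta> \<sigma> (k,1)"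
        by (simp_all add: wd_nonneg del: wd_simps)
    qed
    then show ?thesis using False k m by (simp add: add_divide_distrib[symmetric])
  qed
  have "(\<Sum>z\<in>Sd m. sqrt (wd m \<delta> \<sigma> z * wd m \<delta> (flip j \<sigma>) z)) = (\<Sum>k<m. if k = j then sqrt (1 - 4*\<delta>^2) / m else 1/m)"
    unfolding sum_Sd by (rule sum.cong) (auto simp del: wd_simps simp: eqk)
  also have "\<dots> = sqrt (1 - 4*\<delta>^2) / m + (m - 1) / m"
  proof -
    have "{x. x < m} \<inter> - {j} = {..<m} - {j}" by auto
    then have "card ({x. x < m} \<inter> - {j}) = m - 1" using j by (simp add: card_Diff_singleton)
    then show ?thesis using j m by (simp add: sum.If_cases Int_absorb1 lessThan_def of_nat_diff)
  qed
  also have "\<dots> = 1 - (1 - sqrt (1 - 4*\<delta>^2)) / m"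
    using m by (simp add: field_simps)
  finally show ?thesis .
qed

lemma affinity:
  assumes j: "j < m"
  shows "(\<Sum>D\<in>Tn n m. sqrt (Wt n m \<delta> \<sigma> D * Wt n m \<delta> (flip j \<sigma>) D)) = (1 - (1 - sqrt (1 - 4*\<delta>^2)) / m) ^ n"
proof -
  have "(\<Sum>D\<in>Tn n m. sqrt (Wt n m \<delta> \<sigma> D * Wt n m \<delta> (flip j \<sigma>) D))
      = (\<Sum>D\<in>Tn n m. \<Prod>i<n. sqrt (wd m \<delta> \<sigma> (D i) * wd m \<delta> (flip j \<sigma>) (D i)))"
    unfolding Wt_def by (simp add: prod.distrib[symmetric] sqrt_prod)
  also have "\<dots> = (\<Prod>i<n. \<Sum>z\<in>Sd m. sqrt (wd m \<delta> \<sigma> z * wd m \<delta> (flip j \<sigma>) z))"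
    unfolding Tn_def by (rule prod_sum_PiE[symmetric]) auto
  finally show ?thesis using aff_one[OF j] by simp
qed

lemma Lmin_CS:
  assumes j: "j < m"
  shows "((1 - (1 - sqrt (1 - 4*\<delta>^2)) / m) ^ n)^2 / 2 \<le> (\<Sum>D\<in>Tn n m. min (Wt n m \<delta> \<sigma> D) (Wt n m \<delta> (flip j \<sigma>) D))"
proof -
  define a where "a D = Wt n m \<delta> \<sigma> D" for D
  define b where "b D = Wt n m \<delta> (flip j \<sigma>) D" for D
  have a0: "0 \<le> a D" and b0: "0 \<le> b D" for D by (simp_all add: a_def b_def Wt_nonneg)
  have eq: "(\<Sum>D\<in>Tn n m. sqrt (a D * b D)) = (\<Sum>D\<in>Tn n m. sqrt (min (a D) (b D)) * sqrt (max (a D) (b D)))"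
    by (rule sum.cong) (auto simp: real_sqrt_mult[symmetric] min_def max_def mult.commute)
  have "(\<Sum>D\<in>Tn n m. sqrt (min (a D) (b D)) * sqrt (max (a D) (b D)))^2 \<le> (\<Sum>D\<in>Tn n m. (sqrt (min (a D) (b D)))^2) * (\<Sum>D\<in>Tn n m. (sqrt (max (a D) (b D)))^2)"
    by (rule Cauchy_Schwarz_ineq_sum)
  then have "(\<Sum>D\<in>Tn n m. sqrt (a D * b D))^2 \<le> (\<Sum>D\<in>Tn n m. (sqrt (min (a D) (b D)))^2) * (\<Sum>D\<in>Tn n m. (sqrt (max (a D) (b D)))^2)"
    by (simp only: eq)
  also have "\<dots> = (\<Sum>D\<in>Tn n m. min (a D) (b D)) * (\<Sum>D\<in>Tn n m. max (a D) (b D))"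
  proof -
    have sq1: "(sqrt (min (a D) (b D)))^2 = min (a D) (b D)" "(sqrt (max (a D) (b D)))^2 = max (a D) (b D)" for D
      using a0[of D] b0[of D] by (auto intro: real_sqrt_pow2)
    show ?thesis by (simp only: sq1)
  qed
  also have "\<dots> \<le> (\<Sum>D\<in>Tn n m. min (a D) (b D)) * 2"
  proof (rule mult_left_mono)
    have "(\<Sum>D\<in>Tn n m. max (a D) (b D)) \<le> (\<Sum>D\<in>Tn n m. a D + b D)"
      using a0 b0 by (intro sum_mono) auto
    also have "\<dots> = 2" by (simp add: sum.distrib a_def b_def sumW)
    finally show "(\<Sum>D\<in>Tn n m. max (a D) (b D)) \<le> 2" .
    show "0 \<le> (\<Sum>D\<in>Tn n m. min (a D) (b D))" using a0 b0 by (intro sum_nonneg) auto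
  qed
  finally show ?thesis using affinity[OF j] by (simp add: a_def b_def)
qed

end

lemma Lmin_c:
  assumes m: "m > 0" and j: "j < m"
  shows "1 - real n / m \<le> (\<Sum>D\<in>Tn n m. min (Wt n m (1/2) \<sigma> D) (Wt n m (1/2) (flip j \<sigma>) D))"
proof -
  interpret des m "1/2" using m by unfold_locales auto
  have w01: "wd m (1/2) \<tau> z = 0 \<or> wd m (1/2) \<tau> z = 1/m" for \<tau> z
    by (cases "z \<in> Sd m") (auto simp: wd_def Sd_def sg_def)
  have W01: "Wt n m (1/2) \<tau> D = 0 \<or> Wt n m (1/2) \<tau> D = (1/m)^n" for \<tau> D
  proof (cases "\<exists>i<n. wd m (1/2) \<tau> (D i) = 0")
    case True then show ?thesis by (auto simp: Wt_def)
  next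
    case False
    then have "Wt n m (1/2) \<tau> D = (\<Prod>i<n. 1/m)" unfolding Wt_def
      by (intro prod.cong) (use w01 in blast)+
    then show ?thesis by simp
  qed
  have "(\<Sum>D\<in>Tn n m. min (Wt n m (1/2) \<sigma> D) (Wt n m (1/2) (flip j \<sigma>) D))
     = (\<Sum>D\<in>Tn n m. sqrt (Wt n m (1/2) \<sigma> D * Wt n m (1/2) (flip j \<sigma>) D))"
  proof (rule sum.cong[OF refl])
    fix D
    show "min (Wt n m (1/2) \<sigma> D) (Wt n m (1/2) (flip j \<sigma>) D) = sqrt (Wt n m (1/2) \<sigma> D * Wt n m (1/2) (flip j \<sigma>) D)"
      using W01[of \<sigma> D] W01[of "flip j \<sigma>" D] by (auto simp: real_sqrt_mult)
  qed
  also have "\<dots> = (1 - 1/m)^n" using affinity[OF j] by (simp add: power2_eq_square)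
  also have "\<dots> \<ge> 1 - real n / m"
    using Bernoulli_inequality[of "-1/m" n] m by simp
  finally show ?thesis .
qed

lemma Lmin_b:
  assumes d: "des m \<delta>" and j: "j < m" and small: "4 * real n * \<delta>^2 \<le> m / 2"
  shows "1/8 \<le> (\<Sum>D\<in>Tn n m. min (Wt n m \<delta> \<sigma> D) (Wt n m \<delta> (flip j \<sigma>) D))"
proof -
  interpret des m \<delta> by fact
  define x where "x = (1 - sqrt (1 - 4*\<delta>^2)) / m"
  have "\<delta>^2 \<le> (1/2)^2" using d0 d1 by (intro power_mono) auto
  then have u: "0 \<le> 4*\<delta>^2" "4*\<delta>^2 \<le> 1" by (auto simp: power2_eq_square)
  have "1 - 4*\<delta>^2 \<le> sqrt (1 - 4*\<delta>^2)"
    using u by (intro real_le_rsqrt) (auto simp: power2_eq_square intro: mult_left_le_one_le)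
  then have x1: "x \<le> 4*\<delta>^2/m" unfolding x_def using m by (simp add: divide_right_mono)
  have x0: "0 \<le> x" unfolding x_def using u by simp
  have "4*\<delta>^2/m \<le> 4*\<delta>^2" using m u by (simp add: divide_le_eq mult_le_cancel_left1)
  then have "x \<le> 1" using x1 u by linarith
  have "1/2 \<le> 1 - real n * x"
  proof -
    have "real n * x \<le> real n * (4*\<delta>^2/m)" by (rule mult_left_mono[OF x1]) simp
    also have "\<dots> = 4 * real n * \<delta>^2 / m" by simp
    also have "\<dots> \<le> 1/2" using small m by (simp add: divide_le_eq)
    finally show ?thesis by simp
  qed
  also have "\<dots> \<le> (1 - x)^n" using Bernoulli_inequality[of "-x" n] \<open>x \<le> 1\<close> by simp
  finally have A: "1/2 \<le> (1 - x)^n" .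
  then have "(1/2)^2 \<le> ((1 - x)^n)^2" by (intro power_mono) auto
  then have "1/8 \<le> ((1 - x)^n)^2 / 2" by (simp add: power2_eq_square)
  also have "\<dots> \<le> (\<Sum>D\<in>Tn n m. min (Wt n m \<delta> \<sigma> D) (Wt n m \<delta> (flip j \<sigma>) D))"
    using Lmin_CS[OF j] unfolding x_def by simp
  finally show ?thesis .
qed


context des begin

lemma sqdist_Md: "sqdist (Md m \<delta> \<sigma>) f g = ennreal ((\<Sum>j<m. (f j - g j)^2) / m)"
proof -
  have "sqdist (Md m \<delta> \<sigma>) f g = (\<Sum>j<m. ennreal (1/m) * ennreal ((f j - g j)^2))"
    unfolding sqdist_def by (rule nn_marg)
  also have "\<dots> = (\<Sum>j<m. ennreal ((f j - g j)^2 / m))"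
    by (rule sum.cong) (auto simp: ennreal_mult[symmetric])
  also have "\<dots> = ennreal (\<Sum>j<m. (f j - g j)^2 / m)"
    by (rule sum_ennreal) auto
  finally show ?thesis by (simp add: sum_divide_distrib)
qed

lemma sqdist_eta: "sqdist (Md m \<delta> \<sigma>) f (eta (Md m \<delta> \<sigma>)) = ennreal ((\<Sum>j<m. (f j - td \<delta> \<sigma> j)^2) / m)"
  unfolding sqdist_Md by (simp add: eta_Md)

lemma risk_Md:
  assumes fh: "fh \<in> estimators n"
  shows "risk n (Md m \<delta> \<sigma>) fh = ennreal (Rk n m \<delta> fh \<sigma>)"
proof -
  have [measurable]: "(\<lambda>D. fh D j) \<in> borel_measurable (PiM {..<n} (\<lambda>_. obs_space))" for j
    using fh by (simp add: estimators_def sample_space_def)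
  have meas: "(\<lambda>D. ennreal ((\<Sum>j<m. (fh D j - td \<delta> \<sigma> j)^2) / m)) \<in> borel_measurable (PiM {..<n} (\<lambda>_. obs_space))"
    by measurable
  have "risk n (Md m \<delta> \<sigma>) fh = (\<integral>\<^sup>+D. ennreal ((\<Sum>j<m. (fh D j - td \<delta> \<sigma> j)^2) / m) \<partial>PiM {..<n} (\<lambda>_. Md m \<delta> \<sigma>))"
    unfolding risk_def sqdist_eta ..
  also have "\<dots> = (\<Sum>D\<in>Tn n m. (\<Prod>i<n. ennreal (pmf (Pd m \<delta> \<sigma>) (D i))) * ennreal ((\<Sum>j<m. (fh D j - td \<delta> \<sigma> j)^2) / m))"
    unfolding Md_def Tn_def by (rule bridge[OF _ _ set_Pd meas]) auto
  also have "\<dots> = (\<Sum>D\<in>Tn n m. ennreal (Wt n m \<delta> \<sigma> D * ((\<Sum>j<m. (fh D j - td \<delta> \<sigma> j)^2) / m)))"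
  proof (rule sum.cong[OF refl])
    fix D
    have A: "0 \<le> Wt n m \<delta> \<sigma> D" by (rule Wt_nonneg)
    have B: "0 \<le> (\<Sum>j<m. (fh D j - td \<delta> \<sigma> j)^2) / m" by (intro divide_nonneg_nonneg sum_nonneg) auto
    have "(\<Prod>i<n. ennreal (pmf (Pd m \<delta> \<sigma>) (D i))) = ennreal (Wt n m \<delta> \<sigma> D)"
      by (simp add: pmf_Pd Wt_def prod_ennreal wd_nonneg)
    then show "(\<Prod>i<n. ennreal (pmf (Pd m \<delta> \<sigma>) (D i))) * ennreal ((\<Sum>j<m. (fh D j - td \<delta> \<sigma> j)^2) / m)
      = ennreal (Wt n m \<delta> \<sigma> D * ((\<Sum>j<m. (fh D j - td \<delta> \<sigma> j)^2) / m))"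
      by (simp only: ennreal_mult[OF A B])
  qed
  also have "\<dots> = ennreal (Rk n m \<delta> fh \<sigma>)"
    unfolding Rk_def by (rule sum_ennreal) (auto intro!: mult_nonneg_nonneg divide_nonneg_nonneg Wt_nonneg sum_nonneg simp del: times_divide_eq_right)
  finally show ?thesis .
qed

lemma eta_in_Md:
  assumes b: "\<And>j. j < m \<Longrightarrow> 2 * \<delta> \<le> real (Suc j) powr (-1 / p)"
  shows "eta_in (Md m \<delta> \<sigma>) (Fcls p)"
proof -
  define g where "g j = (if j < m then 2 * \<delta> * sg (\<sigma> j) else 0)" for j
  define f where "f j = (1 + g j) / 2" for j
  have "g \<in> Bp p" unfolding Bp_def g_def using b d0 by (auto simp: abs_mult)
  then have "f \<in> Fcls p" unfolding Fcls_def f_def by auto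
  moreover have "f x = eta (Md m \<delta> \<sigma>) x" if "measure (Md m \<delta> \<sigma>) ({x} \<times> UNIV) > 0" for x
  proof -
    have "x < m" using that by (simp add: measure_col split: if_splits)
    then show ?thesis by (simp add: eta_Md f_def g_def td_def)
  qed
  ultimately show ?thesis unfolding eta_in_def by blast
qed

end

lemma exists_ge_avg:
  fixes f :: "'a \<Rightarrow> real"
  assumes "finite A" "A \<noteq> {}" "real (card A) * L \<le> (\<Sum>a\<in>A. f a)"
  shows "\<exists>a\<in>A. L \<le> f a"
proof (rule ccontr)
  assume "\<not> ?thesis"
  then have "\<And>a. a \<in> A \<Longrightarrow> f a < L" by auto
  then have "(\<Sum>a\<in>A. f a) < real (card A) * L"
    using assms by (intro sum_bounded_above_strict) (auto simp: card_gt_0_iff)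
  then show False using assms by simp
qed

lemma approx_c:
  assumes m: "m > 0" and p: "p > 0"
  defines "b \<equiv> \<lambda>j. real (Suc j) powr (-1/p)"
  defines "fs \<equiv> \<lambda>\<sigma> j. (1 + (if j < m then b j * sg (\<sigma> j) else 0)) / 2"
  shows "fs \<sigma> \<in> Fcls p"
    and "sqdist (Md m (1/2) \<sigma>) (fs \<sigma>) (eta (Md m (1/2) \<sigma>)) = ennreal ((\<Sum>j<m. (1 - b j)^2) / (4*m))"
proof -
  interpret des m "1/2" using m by unfold_locales auto
  define g where "g j = (if j < m then b j * sg (\<sigma> j) else 0)" for j
  have "g \<in> Bp p" unfolding Bp_def g_def b_def by (auto simp: abs_mult)
  then show "fs \<sigma> \<in> Fcls p" unfolding Fcls_def fs_def g_def by auto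
  have h: "(fs \<sigma> j - td (1/2) \<sigma> j)^2 = (1 - b j)^2 / 4" if "j < m" for j
    using that unfolding fs_def td_def sg_def by (auto simp: power2_eq_square field_simps)
  have "(fs \<sigma> j - td (1/2) \<sigma> j)^2 / m = (1 - b j)^2 / (4*m)" if "j < m" for j
    unfolding h[OF that] by simp
  then have "(\<Sum>j<m. (fs \<sigma> j - td (1/2) \<sigma> j)^2 / m) = (\<Sum>j<m. (1 - b j)^2 / (4*m))"
    by (intro sum.cong) auto
  then show "sqdist (Md m (1/2) \<sigma>) (fs \<sigma>) (eta (Md m (1/2) \<sigma>)) = ennreal ((\<Sum>j<m. (1 - b j)^2) / (4*m))"
    unfolding sqdist_eta by (simp add: sum_divide_distrib)
qed


lemma part_b:
  assumes p: "p > 0" and n: "n \<ge> 1"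
  shows "ennreal (1/128 * real n powr (-2/(2+p))) \<le>
    (INF fh\<in>estimators n. SUP M\<in>{M\<in>dists {0,1}. eta_in M (Fcls p)}. risk n M fh)"
proof (rule INF_greatest)
  fix fh assume fh: "fh \<in> estimators n"
  define X where "X = real n powr (p/(p+2))"
  define m where "m = nat \<lfloor>X\<rfloor>"
  define \<delta> where "\<delta> = (1/4) * real n powr (-1/(p+2))"
  have n1: "1 \<le> real n" using n by simp
  have X1: "1 \<le> X" unfolding X_def using n1 p by (intro ge_one_powr_ge_zero) auto
  have mX: "real m \<le> X" unfolding m_def using X1 by simp
  have mX2: "X/2 \<le> real m"
  proof -
    have "X - 1 < of_int \<lfloor>X\<rfloor>" by linarith
    moreover have "1 \<le> real_of_int \<lfloor>X\<rfloor>" using X1 by simp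
    ultimately have "X/2 \<le> real_of_int \<lfloor>X\<rfloor>" by linarith
    moreover have "real m = real_of_int \<lfloor>X\<rfloor>" unfolding m_def using X1 by simp
    ultimately show ?thesis by simp
  qed
  have m0: "m > 0" using mX2 X1 by simp
  have np: "real n powr (-1/(p+2)) \<le> 1"
    using powr_mono[of "-1/(p+2)" 0 "real n"] n1 p by simp
  have d0: "0 \<le> \<delta>" unfolding \<delta>_def by simp
  have d1: "\<delta> \<le> 1/2" unfolding \<delta>_def using np by simp
  interpret des m \<delta> using m0 d0 d1 by unfold_locales
  have Xp: "X powr (-1/p) = real n powr (-1/(p+2))"
    unfolding X_def using p n1 by (simp add: powr_powr)
  have bnd: "2 * \<delta> \<le> real (Suc j) powr (-1/p)" if j: "j < m" for j
  proof -
    have "X powr (-1/p) \<le> real (Suc j) powr (-1/p)"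
      using j mX p by (intro powr_mono2') auto
    then have "real n powr (-1/(p+2)) \<le> real (Suc j) powr (-1/p)" unfolding Xp .
    moreover have "0 \<le> real n powr (-1/(p+2))" by simp
    ultimately show ?thesis unfolding \<delta>_def by linarith
  qed
  have dsq: "\<delta>^2 = (1/16) * real n powr (-2/(p+2))"
    unfolding \<delta>_def power2_eq_square using n1 by (simp add: powr_add[symmetric])
  have nX: "real n * real n powr (-2/(p+2)) = X"
  proof -
    have "real n powr (1 + -2/(p+2)) = real n powr 1 * real n powr (-2/(p+2))" by (rule powr_add)
    then have "real n * real n powr (-2/(p+2)) = real n powr (1 + -2/(p+2))"
      using n1 by simp
    also have "1 + -2/(p+2) = p/(p+2)" using p by (simp add: field_simps)
    finally show ?thesis unfolding X_def .
  qed
  have small: "4 * real n * \<delta>^2 \<le> m / 2"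
  proof -
    have "4 * real n * \<delta>^2 = X / 4" unfolding dsq using nX by (simp add: field_simps)
    then show ?thesis using mX2 X1 by simp
  qed
  have L: "1/8 \<le> (\<Sum>D\<in>Tn n m. min (Wt n m \<delta> \<sigma> D) (Wt n m \<delta> (flip j \<sigma>) D))" if "j < m" for \<sigma> j
    by (rule Lmin_b[OF des_axioms that small])
  have "real (card (Sig m)) * (\<delta>^2 * (1/8)) \<le> (\<Sum>\<sigma>\<in>Sig m. Rk n m \<delta> fh \<sigma>)"
    using Rk_sum[of "1/8" n fh, OF L] by (simp add: mult.assoc)
  then obtain \<sigma> where \<sigma>: "\<sigma> \<in> Sig m" "\<delta>^2 * (1/8) \<le> Rk n m \<delta> fh \<sigma>"
    using exists_ge_avg[OF finite_Sig Sig_ne] by blast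
  have "1/128 * real n powr (-2/(2+p)) = \<delta>^2 * (1/8)"
    unfolding dsq by (simp add: add.commute)
  then have "ennreal (1/128 * real n powr (-2/(2+p))) \<le> risk n (Md m \<delta> \<sigma>) fh"
    using \<sigma>(2) by (simp add: risk_Md[OF fh] ennreal_leI)
  also have "\<dots> \<le> (SUP M\<in>{M\<in>dists {0,1}. eta_in M (Fcls p)}. risk n M fh)"
    by (rule SUP_upper) (simp add: Md_dists eta_in_Md[OF bnd])
  finally show "ennreal (1/128 * real n powr (-2/(2+p))) \<le> (SUP M\<in>{M\<in>dists {0,1}. eta_in M (Fcls p)}. risk n M fh)" .
qed


lemma lin_aux:
  fixes t mp q A K R :: real
  shows "0 \<le> t \<Longrightarrow> (mp - q)/4 \<le> A - K \<Longrightarrow> q \<le> mp/2 \<Longrightarrow> t/4 \<le> mp \<Longrightarrow> A \<le> R \<Longrightarrow> 1/128 * t \<le> R - K"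
  by (simp add: field_simps)

lemma part_c:
  assumes p: "p \<ge> 2" and n: "n \<ge> 1"
  shows "ereal (1/128 * real n powr (-1/(p-1))) \<le>
    (INF fh\<in>estimators n. SUP M\<in>dists {0..1}.
          enn2ereal (risk n M fh) - (INF f\<in>Fcls p. enn2ereal (sqdist M f (eta M))))"
proof (rule INF_greatest)
  fix fh assume fh: "fh \<in> estimators n"
  define Y where "Y = (2 * real n) powr (p/(p-1))"
  define m where "m = nat \<lceil>Y\<rceil>"
  define b where "b = (\<lambda>j. real (Suc j) powr (-1/p))"
  define mp where "mp = real m powr (-1/p)"
  have n1: "1 \<le> real n" using n by simp
  have p0: "p > 0" using p by simp
  have Y2: "2 * real n \<le> Y"
  proof -
    have "(2 * real n) powr 1 \<le> (2 * real n) powr (p/(p-1))"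
      using n1 p by (intro powr_mono) (auto simp: field_simps)
    then show ?thesis unfolding Y_def using n1 by simp
  qed
  have mY: "Y \<le> real m" unfolding m_def by linarith
  have mY2: "real m \<le> 2 * Y"
  proof -
    have "of_int \<lceil>Y\<rceil> < Y + 1" by linarith
    then show ?thesis unfolding m_def using Y2 n1 by linarith
  qed
  have m0: "m > 0" using mY Y2 n1 by simp
  interpret des m "1/2" using m0 by unfold_locales auto
  have L: "1 - real n / m \<le> (\<Sum>D\<in>Tn n m. min (Wt n m (1/2) \<sigma> D) (Wt n m (1/2) (flip j \<sigma>) D))" if "j < m" for \<sigma> j
    by (rule Lmin_c[OF m0 that])
  have "real (card (Sig m)) * ((1/2)^2 * (1 - real n / m)) \<le> (\<Sum>\<sigma>\<in>Sig m. Rk n m (1/2) fh \<sigma>)"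
    using Rk_sum[of "1 - real n / m" n fh, OF L] by (simp add: mult.assoc)
  then obtain \<sigma> where \<sigma>: "\<sigma> \<in> Sig m" "(1/2)^2 * (1 - real n / m) \<le> Rk n m (1/2) fh \<sigma>"
    using exists_ge_avg[OF finite_Sig Sig_ne] by blast
  define K where "K = (\<Sum>j<m. (1 - b j)^2) / (4*m)"
  have bj: "mp \<le> b j" "b j \<le> 1" if "j < m" for j
  proof -
    show "mp \<le> b j" unfolding mp_def b_def using that p0 by (intro powr_mono2') auto
    show "b j \<le> 1" unfolding b_def using p0 powr_mono[of "-1/p" 0 "real (Suc j)"] by simp
  qed
  have ex1: "(mp - real n / m) / 4 \<le> (1/2)^2 * (1 - real n / m) - K"
  proof -
    have "(\<Sum>j<m. ((1 - real n / m) - (1 - b j)^2) / (4*m)) = (\<Sum>j<m. (1 - real n / m) / (4*m)) - (\<Sum>j<m. (1 - b j)^2 / (4*m))"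
      by (simp add: diff_divide_distrib sum_subtractf)
    also have "\<dots> = (1/2)^2 * (1 - real n / m) - K"
      unfolding K_def using m0 by (simp add: sum_divide_distrib power2_eq_square)
    finally have "(1/2)^2 * (1 - real n / m) - K = (\<Sum>j<m. ((1 - real n / m) - (1 - b j)^2) / (4*m))" by simp
    also have "\<dots> \<ge> (\<Sum>j<m. (mp - real n / m) / (4*m))"
    proof (rule sum_mono)
      fix j assume "j \<in> {..<m}"
      then have "mp \<le> b j" "b j \<le> 1" using bj by auto
      moreover have "0 \<le> b j" unfolding b_def by simp
      ultimately have "(1 - b j)^2 \<le> 1 - b j" by (simp add: power2_eq_square mult_left_le_one_le)
      then have "mp - real n / m \<le> (1 - real n / m) - (1 - b j)^2" using \<open>mp \<le> b j\<close> by linarith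
      then show "(mp - real n / m) / (4*m) \<le> ((1 - real n / m) - (1 - b j)^2) / (4*m)"
        using m0 by (intro divide_right_mono) auto
    qed
    also have "(\<Sum>j<m. (mp - real n / m) / (4*m)) = (mp - real n / m) / 4" using m0 by simp
    finally show ?thesis .
  qed
  have mmp: "real m * mp = real m powr ((p-1)/p)"
  proof -
    have "real m powr (1 + -1/p) = real m powr 1 * real m powr (-1/p)" by (rule powr_add)
    moreover have "1 + -1/p = (p-1)/p" using p0 by (simp add: field_simps)
    ultimately show ?thesis unfolding mp_def using m0 by simp
  qed
  have Ypow: "Y powr ((p-1)/p) = 2 * real n"
    unfolding Y_def using p n1 by (simp add: powr_powr)
  have nm: "real n / m \<le> mp / 2"
  proof -
    have "Y powr ((p-1)/p) \<le> real m powr ((p-1)/p)"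
      using mY Y2 n1 p by (intro powr_mono2) auto
    then have "2 * real n \<le> real m * mp" unfolding Ypow mmp .
    then show ?thesis using m0 by (simp add: field_simps)
  qed
  have mp_low: "real n powr (-1/(p-1)) / 4 \<le> mp"
  proof -
    have "(2*Y) powr (-1/p) \<le> mp" unfolding mp_def using mY2 m0 p0 by (intro powr_mono2') auto
    moreover have "(2*Y) powr (-1/p) = 2 powr (-1/p) * (2 powr (-1/(p-1)) * real n powr (-1/(p-1)))"
    proof -
      have "Y powr (-1/p) = (2 * real n) powr (-1/(p-1))"
        unfolding Y_def using p n1 by (simp add: powr_powr)
      then show ?thesis using n1 by (simp add: powr_mult)
    qed
    moreover have "1/2 \<le> 2 powr (-1/p)"
      using powr_mono[of "-1" "-1/p" 2] p by (simp add: powr_minus_divide field_simps)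
    moreover have "1/2 \<le> 2 powr (-1/(p-1))"
      using powr_mono[of "-1" "-1/(p-1)" 2] p by (simp add: powr_minus_divide field_simps)
    moreover have "0 \<le> real n powr (-1/(p-1))" by simp
    ultimately show ?thesis
    proof -
      assume A: "(2*Y) powr (-1/p) \<le> mp"
        and B: "(2*Y) powr (-1/p) = 2 powr (-1/p) * (2 powr (-1/(p-1)) * real n powr (-1/(p-1)))"
        and a: "1/2 \<le> 2 powr (-1/p)" and c: "1/2 \<le> 2 powr (-1/(p-1))" and t: "0 \<le> real n powr (-1/(p-1))"
      have "(1/2) * real n powr (-1/(p-1)) \<le> 2 powr (-1/(p-1)) * real n powr (-1/(p-1))"
        by (rule mult_right_mono[OF c t])
      then have "(1/2) * ((1/2) * real n powr (-1/(p-1))) \<le> 2 powr (-1/p) * (2 powr (-1/(p-1)) * real n powr (-1/(p-1)))"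
        by (rule mult_mono[OF a]) (use t in auto)
      then show ?thesis using A B by simp
    qed
  qed
  have excess: "1/128 * real n powr (-1/(p-1)) \<le> Rk n m (1/2) fh \<sigma> - K"
  proof -
    have "0 \<le> real n powr (-1/(p-1))" by simp
    then show ?thesis using lin_aux ex1 nm mp_low \<sigma>(2) by blast
  qed
  define fs where "fs = (\<lambda>j. (1 + (if j < m then b j * sg (\<sigma> j) else 0)) / 2)"
  have fsF: "fs \<in> Fcls p" and fsd: "sqdist (Md m (1/2) \<sigma>) fs (eta (Md m (1/2) \<sigma>)) = ennreal K"
    using approx_c[OF m0 p0, of \<sigma>] unfolding fs_def K_def b_def by auto
  have K0: "0 \<le> K" unfolding K_def by (auto intro!: divide_nonneg_nonneg sum_nonneg)
  have R0: "0 \<le> Rk n m (1/2) fh \<sigma>" unfolding Rk_def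
    by (auto intro!: mult_nonneg_nonneg divide_nonneg_nonneg Wt_nonneg sum_nonneg simp del: times_divide_eq_right)
  have "ereal (1/128 * real n powr (-1/(p-1))) \<le> ereal (Rk n m (1/2) fh \<sigma>) - ereal K"
    using excess by simp
  also have "\<dots> \<le> enn2ereal (risk n (Md m (1/2) \<sigma>) fh) - (INF f\<in>Fcls p. enn2ereal (sqdist (Md m (1/2) \<sigma>) f (eta (Md m (1/2) \<sigma>))))"
  proof (rule ereal_minus_mono)
    show "ereal (Rk n m (1/2) fh \<sigma>) \<le> enn2ereal (risk n (Md m (1/2) \<sigma>) fh)"
      using R0 by (simp add: risk_Md[OF fh] enn2ereal_ennreal)
    have "(INF f\<in>Fcls p. enn2ereal (sqdist (Md m (1/2) \<sigma>) f (eta (Md m (1/2) \<sigma>)))) \<le> enn2ereal (sqdist (Md m (1/2) \<sigma>) fs (eta (Md m (1/2) \<sigma>)))"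
      by (rule INF_lower[OF fsF])
    then show "(INF f\<in>Fcls p. enn2ereal (sqdist (Md m (1/2) \<sigma>) f (eta (Md m (1/2) \<sigma>)))) \<le> ereal K"
      using K0 by (simp add: fsd enn2ereal_ennreal)
  qed
  also have "\<dots> \<le> (SUP M\<in>dists {0..1}. enn2ereal (risk n M fh) - (INF f\<in>Fcls p. enn2ereal (sqdist M f (eta M))))"
    by (rule SUP_upper) (use Md_dists dists_mono in blast)
  finally show "ereal (1/128 * real n powr (-1/(p-1))) \<le> (SUP M\<in>dists {0..1}. enn2ereal (risk n M fh) - (INF f\<in>Fcls p. enn2ereal (sqdist M f (eta M))))" .
qed


lemma emp_dist_le:
  assumes "\<And>x. \<bar>f x - g x\<bar> \<le> eps" "0 \<le> eps"
  shows "emp_dist S f g \<le> eps"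
proof (cases "S = []")
  case True then show ?thesis using assms by (simp add: emp_dist_def)
next
  case False
  have "(\<Sum>z\<leftarrow>S. (f (fst z) - g (fst z))^2) \<le> (\<Sum>z\<leftarrow>S. eps^2)"
  proof (rule sum_list_mono)
    fix z
    have "\<bar>f (fst z) - g (fst z)\<bar>^2 \<le> eps^2" using assms by (intro power_mono) auto
    then show "(f (fst z) - g (fst z))^2 \<le> eps^2" by simp
  qed
  then have "(\<Sum>z\<leftarrow>S. (f (fst z) - g (fst z))^2) / real (length S) \<le> eps^2"
    using False by (simp add: sum_list_triv divide_le_eq mult.commute)
  then have "emp_dist S f g \<le> sqrt (eps^2)" unfolding emp_dist_def by (rule real_sqrt_le_mono)
  then show ?thesis using assms by simp
qed

lemma H2_le_cover:
  assumes Fne: "F \<noteq> {}" and fC: "finite C" and cov: "\<And>S f. f \<in> F \<Longrightarrow> \<exists>g\<in>C. emp_dist S f g \<le> eps"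
  shows "H2 F eps n \<le> ereal (ln (real (card C)))"
  unfolding H2_def
proof (rule SUP_least)
  fix S :: "(nat \<times> real) list"
  have "cover_num F eps S \<le> enat (card C)"
    unfolding cover_num_def by (rule INF_lower) (use fC cov in auto)
  then obtain k where k: "cover_num F eps S = enat k" "k \<le> card C"
    by (cases "cover_num F eps S") auto
  have "ln (real k) \<le> ln (real (card C))"
  proof (cases "k = 0")
    case True
    have "C \<noteq> {}" using Fne cov by blast
    then have "1 \<le> card C" using fC by (simp add: Suc_le_eq card_gt_0_iff)
    then show ?thesis using True by simp
  next
    case False then show ?thesis using k by simp
  qed
  then show "(case cover_num F eps S of enat k \<Rightarrow> ereal (ln (real k)) | \<infinity> \<Rightarrow> \<infinity>) \<le> ereal (ln (real (card C)))"
    using k by simp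
qed

lemma Fcls_ne: "Fcls p \<noteq> {}"
proof -
  have "(\<lambda>_. 0) \<in> Bp p" by (simp add: Bp_def)
  then show ?thesis unfolding Fcls_def by blast
qed

lemma Fcls_bound:
  assumes "f \<in> Fcls p"
  shows "\<bar>f j - 1/2\<bar> \<le> real (Suc j) powr (-1/p) / 2"
proof -
  obtain g where g: "g \<in> Bp p" "f = (\<lambda>j. (1 + g j) / 2)" using assms unfolding Fcls_def by blast
  then have "\<bar>g j\<bar> \<le> real (Suc j) powr (-1/p)" unfolding Bp_def by blast
  moreover have "f j - 1/2 = g j / 2" using g(2) by (simp add: field_simps)
  ultimately show ?thesis by (simp only:)
qed

lemma sum_inv_sqrt: "(\<Sum>j<J. 1 / sqrt (real (Suc j))) \<le> 2 * sqrt (real J)"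
proof (induction J)
  case 0 then show ?case by simp
next
  case (Suc J)
  define a where "a = sqrt (real J)"
  define c where "c = sqrt (real (Suc J))"
  have c0: "c > 0" unfolding c_def by simp
  have a0: "a \<ge> 0" unfolding a_def by simp
  have cc: "c * c = a * a + 1" unfolding a_def c_def by simp
  have "2 * a * c \<le> a * a + c * c"
  proof -
    have "0 \<le> (a - c) * (a - c)" by simp
    then show ?thesis by (simp add: algebra_simps)
  qed
  then have "2 * a * c + 1 \<le> 2 * (c * c)" using cc by simp
  then have "(2 * a * c + 1) / c \<le> 2 * (c * c) / c" using c0 by (intro divide_right_mono) auto
  then have "2 * a + 1 / c \<le> 2 * c" using c0 by (simp add: add_divide_distrib)
  moreover have "(\<Sum>j<Suc J. 1 / sqrt (real (Suc j))) = (\<Sum>j<J. 1 / sqrt (real (Suc j))) + 1 / c"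
    by (simp add: c_def)
  ultimately show ?case using Suc.IH unfolding a_def c_def by linarith
qed

lemma ln_le_2sqrt: "z > 0 \<Longrightarrow> ln z \<le> 2 * sqrt z"
proof -
  assume z: "z > 0"
  have "ln (sqrt z) \<le> sqrt z - 1" using z by (intro ln_le_minus_one) auto
  then show ?thesis using z by (simp add: ln_sqrt)
qed


lemma part_a_small:
  assumes p: "p > 0" and e0: "0 < eps" and e1: "eps < 1"
  shows "H2 (Fcls p) eps n \<le> ereal ((6 + 8/p) * eps powr (-p))"
proof -
  define Jr where "Jr = (2*eps) powr (-p)"
  define J where "J = nat \<lceil>Jr\<rceil>"
  define b where "b j = real (Suc j) powr (-1/p)" for j
  define Kk where "Kk j = nat \<lceil>b j / (4*eps)\<rceil>" for j
  define Gr where "Gr j = (\<lambda>k::int. 1/2 + 2*eps * of_int k) ` {(- int (Kk j))..int (Kk j)}" for j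
  define C where "C = PiE_dflt {..<J} (1/2) Gr"
  define E where "E = eps powr (-p)"
  have Jr0: "Jr > 0" unfolding Jr_def using e0 by simp
  have b0: "0 \<le> b j" for j unfolding b_def by simp
  have fG: "finite (Gr j)" for j unfolding Gr_def by simp
  have fC: "finite C" unfolding C_def using fG by (intro finite_PiE_dflt) auto
  have cardG: "card (Gr j) \<le> 2 * Kk j + 1" for j
  proof -
    have "card (Gr j) \<le> card {(- int (Kk j))..int (Kk j)}" unfolding Gr_def by (rule card_image_le) simp
    also have "\<dots> = 2 * Kk j + 1" by simp
    finally show ?thesis .
  qed
  have cardC: "card C = (\<Prod>j<J. card (Gr j))" unfolding C_def using fG by (intro card_PiE_dflt) auto
  have cov: "\<exists>g\<in>C. emp_dist S f g \<le> eps" if f: "f \<in> Fcls p" for S f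
  proof -
    define h where "h j = (if j < J then 1/2 + 2*eps * of_int \<lfloor>(f j - 1/2)/(2*eps) + 1/2\<rfloor> else 1/2)" for j
    have fb: "\<bar>f j - 1/2\<bar> \<le> b j / 2" for j using Fcls_bound[OF f] unfolding b_def .
    have hC: "h \<in> C"
      unfolding C_def PiE_dflt_def
    proof (intro CollectI allI conjI impI)
      fix j assume j: "j \<in> {..<J}"
      define x where "x = (f j - 1/2)/(2*eps)"
      define k where "k = \<lfloor>x + 1/2\<rfloor>"
      have xb: "\<bar>x\<bar> \<le> b j / (4*eps)" unfolding x_def using fb[of j] e0 by (simp add: abs_divide field_simps)
      have c1: "b j / (4*eps) \<le> of_int \<lceil>b j / (4*eps)\<rceil>" by (rule le_of_int_ceiling)
      have y0: "0 \<le> b j / (4*eps)" using b0[of j] e0 by simp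
      have "0 \<le> real_of_int \<lceil>b j / (4*eps)\<rceil>" using le_of_int_ceiling[of "b j / (4*eps)"] y0 by linarith
      then have c0: "0 \<le> \<lceil>b j / (4*eps)\<rceil>" by simp
      have Kj: "int (Kk j) = \<lceil>b j / (4*eps)\<rceil>" unfolding Kk_def using c0 by simp
      have "of_int k \<le> x + 1/2" "x + 1/2 < of_int k + 1" unfolding k_def by linarith+
      then have "k \<le> \<lceil>b j / (4*eps)\<rceil>" "- \<lceil>b j / (4*eps)\<rceil> \<le> k" using xb c1 by linarith+
      then have "k \<in> {(- int (Kk j))..int (Kk j)}" using Kj by simp
      then show "h j \<in> Gr j" using j unfolding h_def Gr_def k_def x_def by auto
    next
      fix j assume "j \<notin> {..<J}" then show "h j = 1/2" unfolding h_def by simp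
    qed
    have close: "\<bar>f j - h j\<bar> \<le> eps" for j
    proof (cases "j < J")
      case True
      define x where "x = (f j - 1/2)/(2*eps)"
      have fx: "f j = 1/2 + 2*eps*x" unfolding x_def using e0 by simp
      have "\<bar>x - of_int \<lfloor>x + 1/2\<rfloor>\<bar> \<le> 1/2" by linarith
      then have "2*eps*\<bar>x - of_int \<lfloor>x + 1/2\<rfloor>\<bar> \<le> 2*eps*(1/2)" using e0 by (intro mult_left_mono) auto
      moreover have "f j - h j = 2*eps*(x - of_int \<lfloor>x + 1/2\<rfloor>)" unfolding h_def using True fx x_def
        by (simp add: algebra_simps)
      ultimately show ?thesis using e0 by (simp add: abs_mult)
    next
      case False
      have "Jr \<le> real J" unfolding J_def by linarith
      also have "\<dots> \<le> real (Suc j)" using False by simp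
      finally have "real (Suc j) powr (-1/p) \<le> Jr powr (-1/p)" using Jr0 p by (intro powr_mono2') auto
      also have "Jr powr (-1/p) = 2*eps" unfolding Jr_def using e0 p by (simp add: powr_powr)
      finally have "b j / 2 \<le> eps" unfolding b_def by simp
      then show ?thesis using fb[of j] False by (simp add: h_def)
    qed
    show ?thesis using hC emp_dist_le[where f=f and g=h and S=S, OF close less_imp_le[OF e0]] by auto
  qed
  have H: "H2 (Fcls p) eps n \<le> ereal (ln (real (card C)))"
    by (rule H2_le_cover[OF Fcls_ne fC cov])
  have lnG: "ln (real (2 * Kk j + 1)) \<le> ln 4 + (2/p) * sqrt (Jr / real (Suc j))" for j
  proof -
    define x where "x = b j / (2*eps)"
    have x0: "0 \<le> x" unfolding x_def using b0[of j] e0 by simp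
    have "real (Kk j) < b j / (4*eps) + 1" unfolding Kk_def using b0[of j] e0
      by (simp add: of_nat_nat) linarith
    then have K3: "real (2 * Kk j + 1) \<le> x + 3" unfolding x_def by (simp add: field_simps)
    have sq0: "0 \<le> (2/p) * sqrt (Jr / real (Suc j))" using p Jr0 by (intro mult_nonneg_nonneg) auto
    show ?thesis
    proof (cases "x \<le> 1")
      case True
      then have "ln (real (2 * Kk j + 1)) \<le> ln 4" using K3 by (subst ln_le_cancel_iff) auto
      then show ?thesis using sq0 by linarith
    next
      case False
      then have "ln (real (2 * Kk j + 1)) \<le> ln (4 * x)" using K3 by (subst ln_le_cancel_iff) auto
      also have "\<dots> = ln 4 + ln x" using False by (simp add: ln_mult)
      also have "x = (Jr / real (Suc j)) powr (1/p)"
      proof -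
        have Jp: "Jr powr (1/p) = 1 / (2*eps)"
        proof -
          have "Jr powr (1/p) = (2*eps) powr (-p * (1/p))" unfolding Jr_def by (rule powr_powr)
          also have "-p * (1/p) = -1" using p by simp
          finally show ?thesis using e0 by (simp add: powr_minus_divide)
        qed
        have A1: "(Jr / real (Suc j)) powr (1/p) = (1 / (2*eps)) / real (Suc j) powr (1/p)"
          by (simp only: powr_divide Jp)
        have A2: "b j = 1 / real (Suc j) powr (1/p)" unfolding b_def by (simp add: powr_minus_divide)
        show ?thesis unfolding x_def A1 A2 by simp
      qed
      also have "ln ((Jr / real (Suc j)) powr (1/p)) = (1/p) * ln (Jr / real (Suc j))" by simp
      also have "\<dots> \<le> (1/p) * (2 * sqrt (Jr / real (Suc j)))"
        using p Jr0 by (intro mult_left_mono ln_le_2sqrt) auto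
      finally show ?thesis by simp
    qed
  qed
  have "ln (real (card C)) \<le> ln (\<Prod>j<J. real (2 * Kk j + 1))"
  proof -
    have "real (card C) \<le> (\<Prod>j<J. real (2 * Kk j + 1))" unfolding cardC of_nat_prod
    proof (intro prod_mono conjI)
      fix j
      show "0 \<le> real (card (Gr j))" by simp
      show "real (card (Gr j)) \<le> real (2 * Kk j + 1)" using cardG[of j] by (simp only: of_nat_le_iff)
    qed
    moreover have "0 < real (card C)"
    proof -
      have "C \<noteq> {}" unfolding C_def Gr_def by (simp add: PiE_dflt_empty_iff)
      then show ?thesis using fC by (simp add: card_gt_0_iff)
    qed
    ultimately show ?thesis by (subst ln_le_cancel_iff) (auto intro: prod_pos)
  qed
  also have "\<dots> = (\<Sum>j<J. ln (real (2 * Kk j + 1)))" by (rule ln_prod) auto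
  also have "\<dots> \<le> (\<Sum>j<J. ln 4 + (2/p) * sqrt (Jr / real (Suc j)))" by (rule sum_mono) (rule lnG)
  also have "\<dots> = real J * ln 4 + (2/p) * sqrt Jr * (\<Sum>j<J. 1 / sqrt (real (Suc j)))"
    by (simp add: sum.distrib sum_distrib_left real_sqrt_divide)
  also have "\<dots> \<le> real J * ln 4 + (2/p) * sqrt Jr * (2 * sqrt (real J))"
    using p Jr0 by (intro add_left_mono mult_left_mono sum_inv_sqrt mult_nonneg_nonneg) auto
  also have "\<dots> \<le> (6 + 8/p) * E"
  proof -
    have E1: "1 \<le> E" unfolding E_def using e0 e1 p powr_mono'[of "-p" 0 eps] by simp
    have JrE: "Jr \<le> E"
    proof -
      have "Jr = 2 powr (-p) * E" unfolding Jr_def E_def using e0 by (simp add: powr_mult)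
      moreover have "2 powr (-p) \<le> 1" using p powr_mono[of "-p" 0 2] by simp
      ultimately show ?thesis using E1 by (simp add: mult_left_le_one_le)
    qed
    have JE: "real J \<le> 2 * E"
    proof -
      have "real J < Jr + 1" unfolding J_def using Jr0 by (simp add: of_nat_nat) linarith
      then show ?thesis using JrE E1 by simp
    qed
    have l4: "ln 4 \<le> (3::real)" using ln_le_minus_one[of 4] by simp
    have "sqrt Jr * sqrt (real J) \<le> sqrt E * sqrt (2 * E)"
      using JrE JE Jr0 by (intro mult_mono real_sqrt_le_mono) auto
    also have "\<dots> = sqrt 2 * E" using E1 by (simp add: real_sqrt_mult)
    also have "\<dots> \<le> 2 * E" using E1 by (intro mult_right_mono) (use real_sqrt_le_mono[of 2 4] in auto)
    finally have sJ: "sqrt Jr * sqrt (real J) \<le> 2 * E" .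
    have "real J * ln 4 \<le> (2*E) * 3" using JE l4 E1 by (intro mult_mono) auto
    moreover have "(2/p) * sqrt Jr * (2 * sqrt (real J)) = (4/p) * (sqrt Jr * sqrt (real J))" by simp
    moreover have "(4/p) * (sqrt Jr * sqrt (real J)) \<le> (4/p) * (2 * E)" using sJ p by (intro mult_left_mono) auto
    ultimately show ?thesis by (simp add: algebra_simps)
  qed
  finally show ?thesis using H unfolding E_def by (meson ereal_less_eq(3) order_trans)
qed


lemma part_a:
  assumes p: "p > 0"
  shows "\<exists>A>0. \<forall>n eps. eps > 0 \<longrightarrow> H2 (Fcls p) eps n \<le> ereal ((A / eps) powr p)"
proof (intro exI[of _ "(6 + 8/p) powr (1/p)"] conjI allI impI)
  define A where "A = (6 + 8/p) powr (1/p)"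
  have c0: "0 < 6 + 8/p" using p by (intro add_pos_pos) auto
  show "0 < (6 + 8/p) powr (1/p)" using c0 by simp
  fix n :: nat and eps :: real assume e0: "eps > 0"
  have Ap: "A powr p = 6 + 8/p"
    unfolding A_def using c0 p by (simp add: powr_powr)
  show "H2 (Fcls p) eps n \<le> ereal (((6 + 8/p) powr (1/p) / eps) powr p)"
  proof (cases "eps < 1")
    case True
    have "(A / eps) powr p = A powr p / eps powr p" by (rule powr_divide)
    also have "\<dots> = (6 + 8/p) * eps powr (-p)" unfolding Ap by (simp add: powr_minus_divide)
    finally show ?thesis using part_a_small[OF p e0 True, of n] unfolding A_def by simp
  next
    case False
    have "H2 (Fcls p) eps n \<le> ereal (ln (real (card {\<lambda>_::nat. 1/2::real})))"
    proof (rule H2_le_cover[OF Fcls_ne])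
      fix S f assume f: "f \<in> Fcls p"
      have "\<bar>f j - 1/2\<bar> \<le> eps" for j
      proof -
        have "real (Suc j) powr (-1/p) \<le> 1" using p powr_mono[of "-1/p" 0 "real (Suc j)"] by simp
        then show ?thesis using Fcls_bound[OF f, of j] False by simp
      qed
      then have "emp_dist S f (\<lambda>_. 1/2) \<le> eps" using e0 by (intro emp_dist_le) auto
      then show "\<exists>g\<in>{\<lambda>_::nat. 1/2::real}. emp_dist S f g \<le> eps" by simp
    qed simp
    then have "H2 (Fcls p) eps n \<le> ereal 0" by simp
    moreover have "ereal 0 \<le> ereal (((6 + 8/p) powr (1/p) / eps) powr p)" by simp
    ultimately show ?thesis by (rule order_trans)
  qed
qed


theorem theorem7:
  shows "\<exists>c>0. \<forall>p::real. p > 0 \<longrightarrow>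
    (\<exists>A>0. \<forall>n eps. eps > 0 \<longrightarrow> H2 (Fcls p) eps n \<le> ereal ((A / eps) powr p))
  \<and> (\<forall>n::nat. n \<ge> 1 \<longrightarrow>
       (INF fh\<in>estimators n. SUP M\<in>{M\<in>dists {0,1}. eta_in M (Fcls p)}. risk n M fh)
         \<ge> ennreal (c * real n powr (-2 / (2 + p))))
  \<and> (p \<ge> 2 \<longrightarrow> (\<forall>n::nat. n \<ge> 1 \<longrightarrow>
       (INF fh\<in>estimators n. SUP M\<in>dists {0..1}.
          enn2ereal (risk n M fh) - (INF f\<in>Fcls p. enn2ereal (sqdist M f (eta M))))
         \<ge> ereal (c * real n powr (-1 / (p - 1)))))"
proof (rule exI[of _ "1/128"], intro conjI allI impI)
  show "(0::real) < 1/128" by simp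
next
  fix p :: real assume p: "p > 0"
  show "\<exists>A>0. \<forall>n eps. eps > 0 \<longrightarrow> H2 (Fcls p) eps n \<le> ereal ((A / eps) powr p)"
    by (rule part_a[OF p])
next
  fix p :: real and n :: nat assume p: "p > 0" and n: "n \<ge> 1"
  show "(INF fh\<in>estimators n. SUP M\<in>{M\<in>dists {0,1}. eta_in M (Fcls p)}. risk n M fh)
         \<ge> ennreal (1/128 * real n powr (-2 / (2 + p)))"
    by (rule part_b[OF p n])
next
  fix p :: real and n :: nat assume p: "p > 0" and p2: "p \<ge> 2" and n: "n \<ge> 1"
  show "(INF fh\<in>estimators n. SUP M\<in>dists {0..1}.
          enn2ereal (risk n M fh) - (INF f\<in>Fcls p. enn2ereal (sqdist M f (eta M))))
         \<ge> ereal (1/128 * real n powr (-1 / (p - 1)))"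
    by (rule part_c[OF p2 n])
qed

end
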